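(* Let $\mathcal{M}$ be a separable metric space, $f:\mathcal{M}\to\mathcal{M}$ continuous, and $\mathcal{X}\subseteq\mathcal{M}$ forward invariant under $f$ and path connected, with $\mathcal{W}$ the set of $\omega$-limit sets of $x_{k+1}=f(x_k)$ on $\mathcal{X}$. Suppose there exist a separable metric space $\mathcal{Z}$, a continuous $g:\mathcal{Z}\to\mathcal{Z}$ such that $z_{k+1}=g(z_k)$ has closed basins, and a continuous map $F:\mathcal{X}\to\mathcal{Z}$ with $F\circ f=g\circ F$ on $\mathcal{X}$; that every trajectory on $\mathcal{X}$ is forward precompact in $\mathcal{X}$; and that $\mathcal{W}$ is countable. If $F$ is one-to-one, then $\mathcal{W}$ has exactly one element.
   Context: Forward orbit of $\xi$: $\{f^k(\xi)\mid k\in\mathbb{N}\}$; forward precompact in $\mathcal{X}$ means its closure in $\mathcal{X}$ is compact. $\omega_{\mathcal{X}}(\xi)$ is the set of $x\in\mathcal{X}$ with $f^{k_j}(\xi)\to x$ for some $k_j\to\infty$; $\mathcal{W}=\{\omega_{\mathcal{X}}(\xi)\mid\xi\in\mathcal{X}\}$. For $g$ on $\mathcal{Z}$, $\omega$-limit sets are defined analogously; domain of attraction $D^+_{\mathcal{Z}}(\Omega)=\{\zeta\in\mathcal{Z}\mid\omega_{\mathcal{Z}}(\zeta)=\Omega\}$; closed basins means every such domain of attraction is closed. *)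

theory Defs
  imports "HOL-Analysis.Analysis"
begin

definition omega_limit :: "('a::topological_space \<Rightarrow> 'a) \<Rightarrow> 'a set \<Rightarrow> 'a \<Rightarrow> 'a set" where
  "omega_limit f S xi =
     {x \<in> S. \<exists>k::nat \<Rightarrow> nat. filterlim k at_top sequentially \<and>
                 ((\<lambda>j. (f ^^ k j) xi) \<longlongrightarrow> x) sequentially}"

definition omega_limit_sets :: "('a::topological_space \<Rightarrow> 'a) \<Rightarrow> 'a set \<Rightarrow> 'a set set" where
  "omega_limit_sets f S = {omega_limit f S xi | xi. xi \<in> S}"

definition forward_orbit :: "('a \<Rightarrow> 'a) \<Rightarrow> 'a \<Rightarrow> 'a set" where
  "forward_orbit f xi = {(f ^^ k) xi | k. True}"

definition domain_of_attraction :: "('a::topological_space \<Rightarrow> 'a) \<Rightarrow> 'a set \<Rightarrow> 'a set \<Rightarrow> 'a set" where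
  "domain_of_attraction g Z Omega = {z \<in> Z. omega_limit g Z z = Omega}"

definition closed_basins :: "('a::topological_space \<Rightarrow> 'a) \<Rightarrow> bool" where
  "closed_basins g \<longleftrightarrow> (\<forall>Omega \<in> omega_limit_sets g UNIV. closed (domain_of_attraction g UNIV Omega))"

end

theory Submission
  imports Defs
begin

lemma iter_in:
  assumes "f ` X \<subseteq> X" "x \<in> X" shows "(f ^^ k) x \<in> X"
  using assms by (induction k) auto

lemma iter_conj:
  assumes "f ` X \<subseteq> X" "x \<in> X" "\<forall>x\<in>X. F (f x) = g (F x)"
  shows "F ((f ^^ k) x) = (g ^^ k) (F x)"
  using assms by (induction k) (auto simp: iter_in)

lemma omega_conj:
  fixes f :: "'m::metric_space \<Rightarrow> 'm" and g :: "'z::metric_space \<Rightarrow> 'z"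
  assumes invX: "f ` X \<subseteq> X"
    and contF: "continuous_on X F"
    and conj: "\<forall>x\<in>X. F (f x) = g (F x)"
    and precpt: "\<forall>xi\<in>X. compact (X \<inter> closure (forward_orbit f xi))"
    and x: "x \<in> X"
  shows "omega_limit g UNIV (F x) = F ` omega_limit f X x"
proof
  show "F ` omega_limit f X x \<subseteq> omega_limit g UNIV (F x)"
  proof
    fix z assume "z \<in> F ` omega_limit f X x"
    then obtain y k where y: "y \<in> X" "z = F y" "filterlim k at_top sequentially"
      "((\<lambda>j. (f ^^ k j) x) \<longlongrightarrow> y) sequentially"
      unfolding omega_limit_def by blast
    have "((\<lambda>j. F ((f ^^ k j) x)) \<longlongrightarrow> F y) sequentially"
      by (rule continuous_on_tendsto_compose[OF contF y(4) y(1)])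
        (simp add: iter_in[OF invX x])
    then have "((\<lambda>j. (g ^^ k j) (F x)) \<longlongrightarrow> F y) sequentially"
      by (simp add: iter_conj[OF invX x conj])
    then show "z \<in> omega_limit g UNIV (F x)"
      unfolding omega_limit_def using y by blast
  qed
next
  show "omega_limit g UNIV (F x) \<subseteq> F ` omega_limit f X x"
  proof
    fix z assume "z \<in> omega_limit g UNIV (F x)"
    then obtain k where k: "filterlim k at_top sequentially"
      "((\<lambda>j. (g ^^ k j) (F x)) \<longlongrightarrow> z) sequentially"
      unfolding omega_limit_def by blast
    let ?K = "X \<inter> closure (forward_orbit f x)"
    have "compact ?K" using precpt x by blast
    then have sc: "seq_compact ?K" by (rule compact_imp_seq_compact)
    have inK: "\<forall>j. (\<lambda>j. (f ^^ k j) x) j \<in> ?K"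
    proof
      fix j
      have "(f ^^ k j) x \<in> forward_orbit f x" unfolding forward_orbit_def by blast
      then have "(f ^^ k j) x \<in> closure (forward_orbit f x)" using closure_subset by blast
      then show "(\<lambda>j. (f ^^ k j) x) j \<in> ?K" using iter_in[OF invX x] by simp
    qed
    obtain y r where y: "y \<in> ?K" "strict_mono r"
      "((\<lambda>j. (f ^^ k j) x) \<circ> r) \<longlonglongrightarrow> y"
      using seq_compactE[OF sc inK] by metis
    have yX: "y \<in> X" using y by blast
    have kr: "filterlim (k \<circ> r) at_top sequentially"
      using filterlim_compose[OF k(1) filterlim_subseq[OF y(2)]] by (simp add: comp_def)
    have lim: "((\<lambda>j. (f ^^ (k \<circ> r) j) x) \<longlongrightarrow> y) sequentially"
      using y(3) by (simp add: comp_def)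
    have "y \<in> omega_limit f X x"
      unfolding omega_limit_def using yX kr lim by blast
    have "((\<lambda>j. F ((f ^^ (k \<circ> r) j) x)) \<longlongrightarrow> F y) sequentially"
      by (rule continuous_on_tendsto_compose[OF contF lim yX])
        (simp add: iter_in[OF invX x])
    then have 1: "((\<lambda>j. (g ^^ k (r j)) (F x)) \<longlongrightarrow> F y) sequentially"
      by (simp add: iter_conj[OF invX x conj])
    have 2: "((\<lambda>j. (g ^^ k (r j)) (F x)) \<longlongrightarrow> z) sequentially"
      using LIMSEQ_subseq_LIMSEQ[OF k(2) y(2)] by (simp add: comp_def)
    have "z = F y" using LIMSEQ_unique[OF 2 1] by simp
    then show "z \<in> F ` omega_limit f X x" using \<open>y \<in> omega_limit f X x\<close> by blast
  qed
qed

theorem corollary21: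
  fixes f :: "'m::metric_space \<Rightarrow> 'm"
    and X :: "'m set"
    and g :: "'z::metric_space \<Rightarrow> 'z"
    and F :: "'m \<Rightarrow> 'z"
  assumes sepM: "separable_space (euclidean :: 'm topology)"
    and contf: "continuous_on UNIV f"
    and invX: "f ` X \<subseteq> X"
    and pcX: "path_connected X"
    and neX: "X \<noteq> {}"
    and sepZ: "separable_space (euclidean :: 'z topology)"
    and contg: "continuous_on UNIV g"
    and basins: "closed_basins g"
    and contF: "continuous_on X F"
    and conj: "\<forall>x\<in>X. F (f x) = g (F x)"
    and precpt: "\<forall>xi\<in>X. compact (X \<inter> closure (forward_orbit f xi))"
    and cntW: "countable (omega_limit_sets f X)"
    and injF: "inj_on F X"
  shows "\<exists>W. omega_limit_sets f X = {W}"
proof (rule ccontr)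
  let ?om = "omega_limit f X"
  have omX: "?om x \<subseteq> X" for x unfolding omega_limit_def by blast
  have eqv: "?om x = ?om y \<longleftrightarrow> omega_limit g UNIV (F x) = omega_limit g UNIV (F y)"
    if "x \<in> X" "y \<in> X" for x y
    using omega_conj[OF invX contF conj precpt that(1)] omega_conj[OF invX contF conj precpt that(2)]
      inj_on_image_eq_iff[OF injF omX omX] by simp
  assume nW: "\<nexists>W. omega_limit_sets f X = {W}"
  obtain x0 where x0: "x0 \<in> X" using neX by blast
  have "?om x0 \<in> omega_limit_sets f X" unfolding omega_limit_sets_def using x0 by blast
  moreover have "omega_limit_sets f X \<noteq> {?om x0}" using nW by blast
  ultimately obtain W' where W': "W' \<in> omega_limit_sets f X" "W' \<noteq> ?om x0" by blast
  then obtain x1 where x1: "x1 \<in> X" "?om x1 \<noteq> ?om x0"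
    unfolding omega_limit_sets_def by auto
  from pcX[unfolded path_connected_def, rule_format, OF x0 x1(1)]
  obtain p where p: "path p" "path_image p \<subseteq> X" "pathstart p = x0" "pathfinish p = x1"
    by blast
  have pX: "p t \<in> X" if "t \<in> {0..1}" for t
    using p(2) that unfolding path_image_def by auto
  define S where "S W = {t \<in> {0..1::real}. ?om (p t) = W}" for W
  define U where "U = S ` omega_limit_sets f X - {{}}"
  have U1: "U = {{0..1}}"
  proof (rule real_Sierpinski_lemma)
    show "countable U" unfolding U_def using cntW by simp
    show "pairwise disjnt U"
      unfolding pairwise_def disjnt_def U_def S_def by blast
    show "closed C \<and> C \<noteq> {}" if "C \<in> U" for C
    proof -
      obtain W where W: "W \<in> omega_limit_sets f X" "C = S W" "C \<noteq> {}"
        using \<open>C \<in> U\<close> unfolding U_def by blast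
      then obtain t0 where t0: "t0 \<in> {0..1}" "?om (p t0) = W" unfolding S_def by blast
      let ?Om = "omega_limit g UNIV (F (p t0))"
      have "?Om \<in> omega_limit_sets g UNIV" unfolding omega_limit_sets_def by blast
      then have cl: "closed (domain_of_attraction g UNIV ?Om)"
        using basins unfolding closed_basins_def by blast
      have Ceq: "C = {0..1} \<inter> (F \<circ> p) -` domain_of_attraction g UNIV ?Om"
      proof (intro set_eqI)
        fix t
        show "t \<in> C \<longleftrightarrow> t \<in> {0..1} \<inter> (F \<circ> p) -` domain_of_attraction g UNIV ?Om"
        proof (cases "t \<in> {0..1}")
          case True
          have "t \<in> C \<longleftrightarrow> ?om (p t) = ?om (p t0)" using True t0(2) W(2) unfolding S_def by auto
          also have "\<dots> \<longleftrightarrow> omega_limit g UNIV (F (p t)) = ?Om" by (rule eqv[OF pX[OF True] pX[OF t0(1)]])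
          finally show ?thesis using True unfolding domain_of_attraction_def by simp
        next
          case False
          then show ?thesis using W(2) unfolding S_def by auto
        qed
      qed
      have cont: "continuous_on {0..1} (F \<circ> p)"
        using p(1) unfolding path_def
        by (meson continuous_on_compose continuous_on_subset contF image_subset_iff pX)
      have "closed ({0..1} \<inter> (F \<circ> p) -` domain_of_attraction g UNIV ?Om)"
        by (rule continuous_closed_preimage[OF cont closed_atLeastAtMost cl])
      then have "closed C" using Ceq by simp
      then show ?thesis using W by blast
    qed
    show "\<Union>U = {0..1}"
    proof
      show "\<Union>U \<subseteq> {0..1}" unfolding U_def S_def by auto
      show "{0..1} \<subseteq> \<Union>U"
      proof
        fix t :: real assume t: "t \<in> {0..1}"
        have "t \<in> S (?om (p t))" using t unfolding S_def by simp
        moreover have "?om (p t) \<in> omega_limit_sets f X"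
          unfolding omega_limit_sets_def using pX[OF t] by blast
        ultimately have "S (?om (p t)) \<in> U" unfolding U_def by blast
        with \<open>t \<in> S (?om (p t))\<close> show "t \<in> \<Union>U" by blast
      qed
    qed
  qed (simp)
  moreover have 0: "0 \<in> S (?om x0)" using p(3) unfolding S_def pathstart_def by simp
  moreover have 1: "1 \<in> S (?om x1)" using p(4) unfolding S_def pathfinish_def by simp
  moreover have n1: "1 \<notin> S (?om x0)" using p(4) x1(2) unfolding S_def pathfinish_def by simp
  moreover have "?om x0 \<in> omega_limit_sets f X" "?om x1 \<in> omega_limit_sets f X"
    unfolding omega_limit_sets_def using x0 x1 by blast+
  ultimately have "S (?om x0) \<in> U" "S (?om x1) \<in> U" unfolding U_def by blast+
  then have "S (?om x0) = {0..1}" using \<open>U = {{0..1}}\<close> by blast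
  then show False using n1 by simp
qed

end
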